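(* For every bijection $\phi:\mathbb N\to\mathbb N$, the map $\phi_*:(\mathrm{Conf}^{lf}_\infty(\mathbb C),d_{\Sigma})\to(\mathrm{Conf}^{lf}_\infty(\mathbb C),d_{\Sigma})$, $\phi_*((a_j)_{j\ge1})=(a_{\phi(j)})_{j\ge1}$, is continuous and in fact a homeomorphism.
   Context: $\mathrm{Conf}^{lf}_\infty(\mathbb C)$ is the set of sequences $x=(x_j)_{j\in\mathbb N}\in\mathbb C^{\mathbb N}$ with $x_i\ne x_j$ for $i\neq j$ and such that for every $R>0$ the set $\{j:|x_j|\le R\}$ is finite. $P(x)=\{x_j:j\in\mathbb N\}$, which lies in $C^{lf}_\infty(\mathbb C)$, the set of countably infinite locally finite subsets of $\mathbb C$. Let $d_{\mathrm{prod}}(x,y)=\sum_j 2^{-j}\min\{|x_j-y_j|,1\}$, and $d_{\Sigma}(x,y)=d_{\mathrm{prod}}(x,y)+d_{\mathcal V}(P(x),P(y))$, where $d_{\mathcal V}$ is the vague metric: for a fixed sequence $(\varphi_j)\subset C_c(\mathbb C)$ such that for each $m$ the $\varphi_j$ supported in $\{|z|\le m\}$ are sup-norm dense among compactly supported continuous real functions supported in $\{|z|\le m\}$, $d_{\mathcal V}(A,B)=\sum_j 2^{-j}\frac{|\sum_{a\in A}\varphi_j(a)-\sum_{b\in B}\varphi_j(b)|}{1+|\sum_{a\in A}\varphi_j(a)-\sum_{b\in B}\varphi_j(b)|}$. *)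

theory Defs
  imports "HOL-Analysis.Analysis"
begin

text \<open>Sequences are indexed by nat starting at 0; index j here corresponds to
  index j+1 in the paper, so the weight 2^-j of the paper becomes 1/2^(Suc j).\<close>

definition Conf_lf :: "(nat \<Rightarrow> complex) set" where
  "Conf_lf = {x. inj x \<and> (\<forall>R>0. finite {j. cmod (x j) \<le> R})}"

definition Pset :: "(nat \<Rightarrow> complex) \<Rightarrow> complex set" where
  "Pset x = range x"

definition d_prod :: "(nat \<Rightarrow> complex) \<Rightarrow> (nat \<Rightarrow> complex) \<Rightarrow> real" where
  "d_prod x y = (\<Sum>j. (1 / 2 ^ Suc j) * min (cmod (x j - y j)) 1)"

text \<open>Sum of a test function over a (locally finite) point set; only the finitely
  many points where the function is nonzero contribute.\<close>
definition psum :: "(complex \<Rightarrow> real) \<Rightarrow> complex set \<Rightarrow> real" where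
  "psum f A = (\<Sum>a\<in>{a\<in>A. f a \<noteq> 0}. f a)"

definition d_vague :: "(nat \<Rightarrow> complex \<Rightarrow> real) \<Rightarrow> complex set \<Rightarrow> complex set \<Rightarrow> real" where
  "d_vague \<phi> A B = (\<Sum>j. (1 / 2 ^ Suc j) *
      (\<bar>psum (\<phi> j) A - psum (\<phi> j) B\<bar> / (1 + \<bar>psum (\<phi> j) A - psum (\<phi> j) B\<bar>)))"

definition d_Sigma :: "(nat \<Rightarrow> complex \<Rightarrow> real) \<Rightarrow> (nat \<Rightarrow> complex) \<Rightarrow> (nat \<Rightarrow> complex) \<Rightarrow> real" where
  "d_Sigma \<phi> x y = d_prod x y + d_vague \<phi> (Pset x) (Pset y)"

definition admissible_tests :: "(nat \<Rightarrow> complex \<Rightarrow> real) \<Rightarrow> bool" where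
  "admissible_tests \<phi> \<longleftrightarrow>
     (\<forall>j. continuous_on UNIV (\<phi> j) \<and> compact (closure {z. \<phi> j z \<noteq> 0})) \<and>
     (\<forall>m::nat. \<forall>f::complex \<Rightarrow> real.
        continuous_on UNIV f \<and> closure {z. f z \<noteq> 0} \<subseteq> cball 0 (real m) \<longrightarrow>
        (\<forall>\<epsilon>>0. \<exists>j. closure {z. \<phi> j z \<noteq> 0} \<subseteq> cball 0 (real m) \<and>
                    (\<forall>z. \<bar>f z - \<phi> j z\<bar> < \<epsilon>)))"

definition push :: "(nat \<Rightarrow> nat) \<Rightarrow> (nat \<Rightarrow> complex) \<Rightarrow> (nat \<Rightarrow> complex)" where
  "push p a = (\<lambda>j. a (p j))"

end

theory Submission
  imports Defs
begin


lemma w_sums: "(\<lambda>j. 1 / 2 ^ Suc j :: real) sums 1"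
  using power_half_series by (simp add: power_one_over)

lemma w_summ:
  assumes "\<And>j. 0 \<le> g j" "\<And>j. g j \<le> (1::real)"
  shows "summable (\<lambda>j. 1 / 2 ^ Suc j * g j)"
proof (rule summable_comparison_test')
  show "summable (\<lambda>j. 1 / 2 ^ Suc j :: real)" using w_sums sums_summable by blast
  fix n show "norm (1 / 2 ^ Suc n * g n) \<le> 1 / 2 ^ Suc n"
    using assms[of n] by (simp add: abs_mult divide_right_mono)
qed

lemma w_nonneg:
  assumes "\<And>j. 0 \<le> g j" "\<And>j. g j \<le> (1::real)"
  shows "0 \<le> (\<Sum>j. 1 / 2 ^ Suc j * g j)"
  by (rule suminf_nonneg[OF w_summ[OF assms]]) (simp add: assms)

lemma w_term:
  assumes "\<And>j. 0 \<le> g j" "\<And>j. g j \<le> (1::real)"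
  shows "1 / 2 ^ Suc k * g k \<le> (\<Sum>j. 1 / 2 ^ Suc j * g j)"
  using sum_le_suminf[OF w_summ[OF assms], of "{k}"] assms by simp

lemma w_tail:
  assumes "\<And>j. 0 \<le> g j" "\<And>j. g j \<le> (1::real)"
  shows "(\<Sum>j. 1 / 2 ^ Suc j * g j) \<le> (\<Sum>j<N. 1 / 2 ^ Suc j * g j) + 1 / 2 ^ N"
proof -
  have S: "summable (\<lambda>j. 1 / 2 ^ Suc j * g j)" by (rule w_summ[OF assms])
  have "(\<Sum>j. 1 / 2 ^ Suc (j + N) * g (j + N)) \<le> (\<Sum>j. 1 / 2 ^ N * (1 / 2 ^ Suc j))"
  proof (rule suminf_le)
    fix n show "1 / 2 ^ Suc (n + N) * g (n + N) \<le> 1 / 2 ^ N * (1 / 2 ^ Suc n)"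
      using assms[of "n+N"] by (simp add: power_add mult_ac divide_right_mono)
    show "summable (\<lambda>j. 1 / 2 ^ Suc (j + N) * g (j + N))"
      using S summable_iff_shift[of "\<lambda>j. 1 / 2 ^ Suc j * g j" N] by simp
    show "summable (\<lambda>j. 1 / 2 ^ N * (1 / 2 ^ Suc j :: real))"
      using w_sums sums_summable summable_mult by blast
  qed
  also have "\<dots> = 1 / 2 ^ N * 1"
    by (rule sums_unique[symmetric], rule sums_mult[OF w_sums])
  finally show ?thesis using suminf_split_initial_segment[OF S, of N] by simp
qed

lemma frac_tri:
  fixes a b c :: real
  shows "\<bar>a - c\<bar> / (1 + \<bar>a - c\<bar>) \<le> \<bar>a - b\<bar> / (1 + \<bar>a - b\<bar>) + \<bar>b - c\<bar> / (1 + \<bar>b - c\<bar>)"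
proof -
  define s t u where "s = \<bar>a - b\<bar>" "t = \<bar>b - c\<bar>" "u = \<bar>a - c\<bar>"
  have st: "s \<ge> 0" "t \<ge> 0" "u \<ge> 0" "u \<le> s + t" unfolding s_t_u_def by auto
  have e1: "u*(1+(s+t)) = u + u*(s+t)" "(s+t)*(1+u) = (s+t) + u*(s+t)" by (simp_all add: algebra_simps)
  have "u / (1 + u) \<le> (s + t) / (1 + (s + t))"
    using st by (simp add: divide_simps e1)
  also have "\<dots> \<le> s / (1 + s) + t / (1 + t)"
    using st by (simp add: divide_simps) (simp add: algebra_simps mult_nonneg_nonneg add_nonneg_nonneg)
  finally show ?thesis unfolding s_t_u_def .
qed

lemma wmono: "a \<le> b + c \<Longrightarrow> 1/2^Suc j * a \<le> 1/2^Suc j * b + 1/2^Suc j * (c::real)"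
  by (simp only: distrib_left[symmetric]) (rule mult_left_mono, simp_all)

lemma prod_nonneg: "0 \<le> d_prod x y"
  unfolding d_prod_def by (rule w_nonneg) auto

lemma vague_nonneg: "0 \<le> d_vague \<phi> A B"
  unfolding d_vague_def by (rule w_nonneg) auto

lemma metric_Sigma: "Metric_space Conf_lf (d_Sigma \<phi>)"
proof
  fix x y
  show "0 \<le> d_Sigma \<phi> x y" unfolding d_Sigma_def using prod_nonneg vague_nonneg by (simp add: add_nonneg_nonneg)
  show "d_Sigma \<phi> x y = d_Sigma \<phi> y x"
    unfolding d_Sigma_def d_prod_def d_vague_def by (simp add: norm_minus_commute abs_minus_commute)
  show "d_Sigma \<phi> x y = 0 \<longleftrightarrow> x = y"
  proof
    assume "x = y" then show "d_Sigma \<phi> x y = 0" unfolding d_Sigma_def d_prod_def d_vague_def by simp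
  next
    assume "d_Sigma \<phi> x y = 0"
    then have "d_prod x y = 0" unfolding d_Sigma_def using prod_nonneg[of x y] vague_nonneg[of \<phi>] by smt
    then have "\<forall>n. 1 / 2 ^ Suc n * min (cmod (x n - y n)) 1 = 0"
      unfolding d_prod_def by (subst (asm) suminf_eq_zero_iff[OF w_summ]) auto
    then have "cmod (x n - y n) = 0" for n by (metis min_def zero_neq_one divide_eq_0_iff mult_eq_0_iff power_eq_0_iff zero_neq_numeral)
    then show "x = y" by (auto simp: fun_eq_iff)
  qed
next
  fix x y z
  have "d_prod x z \<le> (\<Sum>j. 1 / 2 ^ Suc j * min (cmod (x j - y j)) 1 + 1 / 2 ^ Suc j * min (cmod (y j - z j)) 1)"
    unfolding d_prod_def
  proof (rule suminf_le)
    fix j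
    have "cmod (x j - z j) \<le> cmod (x j - y j) + cmod (y j - z j)"
      using norm_triangle_ineq[of "x j - y j" "y j - z j"] by simp
    then have "min (cmod (x j - z j)) 1 \<le> min (cmod (x j - y j)) 1 + min (cmod (y j - z j)) 1"
      unfolding min_def by (smt (verit) norm_ge_zero)
    then show "1 / 2 ^ Suc j * min (cmod (x j - z j)) 1 \<le> 1 / 2 ^ Suc j * min (cmod (x j - y j)) 1 + 1 / 2 ^ Suc j * min (cmod (y j - z j)) 1"
      by (simp add: add_divide_distrib[symmetric] divide_right_mono)
    show "summable (\<lambda>j. 1 / 2 ^ Suc j * min (cmod (x j - z j)) 1)" by (rule w_summ) auto
    show "summable (\<lambda>j. 1 / 2 ^ Suc j * min (cmod (x j - y j)) 1 + 1 / 2 ^ Suc j * min (cmod (y j - z j)) 1)"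
      by (intro summable_add w_summ) auto
  qed
  also have "\<dots> = d_prod x y + d_prod y z"
    unfolding d_prod_def by (rule suminf_add[symmetric]; rule w_summ) auto
  finally have P: "d_prod x z \<le> d_prod x y + d_prod y z" .
  define A B C where "A = Pset x" "B = Pset y" "C = Pset z"
  define f where "f = (\<lambda>t::real. t / (1 + t))"
  have f01: "0 \<le> f \<bar>t\<bar>" "f \<bar>t\<bar> \<le> 1" for t unfolding f_def by (auto simp: divide_simps)
  have "d_vague \<phi> A C \<le> (\<Sum>j. 1 / 2 ^ Suc j * f \<bar>psum (\<phi> j) A - psum (\<phi> j) B\<bar> + 1 / 2 ^ Suc j * f \<bar>psum (\<phi> j) B - psum (\<phi> j) C\<bar>)"
    unfolding d_vague_def
  proof (rule suminf_le)
    fix j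
    show "1 / 2 ^ Suc j * (\<bar>psum (\<phi> j) A - psum (\<phi> j) C\<bar> / (1 + \<bar>psum (\<phi> j) A - psum (\<phi> j) C\<bar>)) \<le> 1 / 2 ^ Suc j * f \<bar>psum (\<phi> j) A - psum (\<phi> j) B\<bar> + 1 / 2 ^ Suc j * f \<bar>psum (\<phi> j) B - psum (\<phi> j) C\<bar>"
      unfolding f_def by (rule wmono, rule frac_tri)
    show "summable (\<lambda>j. 1 / 2 ^ Suc j * (\<bar>psum (\<phi> j) A - psum (\<phi> j) C\<bar> / (1 + \<bar>psum (\<phi> j) A - psum (\<phi> j) C\<bar>)))"
      by (rule w_summ) auto
    show "summable (\<lambda>j. 1 / 2 ^ Suc j * f \<bar>psum (\<phi> j) A - psum (\<phi> j) B\<bar> + 1 / 2 ^ Suc j * f \<bar>psum (\<phi> j) B - psum (\<phi> j) C\<bar>)"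
      by (intro summable_add w_summ f01)
  qed
  also have "\<dots> = d_vague \<phi> A B + d_vague \<phi> B C"
    unfolding d_vague_def f_def by (rule suminf_add[symmetric]; rule w_summ) auto
  finally have V: "d_vague \<phi> A C \<le> d_vague \<phi> A B + d_vague \<phi> B C" .
  show "d_Sigma \<phi> x z \<le> d_Sigma \<phi> x y + d_Sigma \<phi> y z"
    unfolding d_Sigma_def using P V unfolding A_B_C_def by linarith
qed

lemma push_in: assumes "bij q" "x \<in> Conf_lf" shows "push q x \<in> Conf_lf"
proof -
  have "inj (\<lambda>j. x (q j))" using assms by (auto simp: Conf_lf_def inj_def bij_def)
  moreover have "finite {j. cmod (x (q j)) \<le> R}" if "R > 0" for R
  proof -
    have "finite {k. cmod (x k) \<le> R}" using assms that by (auto simp: Conf_lf_def)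
    then have "finite (q -` {k. cmod (x k) \<le> R})" using assms(1) by (intro finite_vimageI) (auto simp: bij_def)
    then show ?thesis by (simp add: vimage_def)
  qed
  ultimately show ?thesis by (simp add: Conf_lf_def push_def)
qed

lemma Pset_push: "bij q \<Longrightarrow> Pset (push q x) = Pset x"
  unfolding Pset_def push_def bij_def by (metis image_comp surj_def image_image range_composition surj_imp_surj_swap fun.set_map)

lemma prod_bound:
  "d_prod (push q x) (push q y) \<le> (\<Sum>j<N. 2 ^ Suc (q j)) * d_prod x y + 1 / 2 ^ N"
proof -
  define g where "g = (\<lambda>k. min (cmod (x k - y k)) 1)"
  have g01: "0 \<le> g k" "g k \<le> 1" for k unfolding g_def by auto
  have "d_prod (push q x) (push q y) = (\<Sum>j. 1 / 2 ^ Suc j * g (q j))"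
    unfolding d_prod_def push_def g_def ..
  also have "\<dots> \<le> (\<Sum>j<N. 1 / 2 ^ Suc j * g (q j)) + 1 / 2 ^ N"
    by (rule w_tail) (simp_all add: g01)
  also have "(\<Sum>j<N. 1 / 2 ^ Suc j * g (q j)) \<le> (\<Sum>j<N. 2 ^ Suc (q j) * d_prod x y)"
  proof (rule sum_mono)
    fix j
    have "1 / 2 ^ Suc (q j) * g (q j) \<le> (\<Sum>k. 1 / 2 ^ Suc k * g k)"
      by (rule w_term) (simp_all add: g01)
    also have "(\<Sum>k. 1 / 2 ^ Suc k * g k) = d_prod x y" by (simp add: d_prod_def g_def)
    finally have "1 / 2 ^ Suc (q j) * g (q j) \<le> d_prod x y" .
    then have "g (q j) \<le> 2 ^ Suc (q j) * d_prod x y" by (simp add: field_simps)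
    moreover have "(1::real) \<le> 2*2^j" using one_le_power[of "2::real" j] by linarith
    moreover have "1 / 2 ^ Suc j * g (q j) \<le> g (q j)" using g01[of "q j"] calculation(2) by (simp add: divide_simps mult_le_cancel_left1)
    ultimately show "1 / 2 ^ Suc j * g (q j) \<le> 2 ^ Suc (q j) * d_prod x y" by linarith
  qed
  finally show ?thesis by (simp add: sum_distrib_right)
qed

lemma Sigma_bound:
  assumes "bij q"
  shows "d_Sigma \<phi> (push q x) (push q y) \<le> ((\<Sum>j<N. 2 ^ Suc (q j)) + 1) * d_Sigma \<phi> x y + 1 / 2 ^ N"
proof -
  define C :: real where "C = (\<Sum>j<N. 2 ^ Suc (q j))"
  have C0: "C \<ge> 0" unfolding C_def by (simp add: sum_nonneg)
  have "d_Sigma \<phi> (push q x) (push q y) \<le> C * d_prod x y + 1 / 2 ^ N + d_vague \<phi> (Pset x) (Pset y)"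
    unfolding d_Sigma_def Pset_push[OF assms] C_def using prod_bound[of q x y N] by linarith
  also have "\<dots> \<le> (C + 1) * d_Sigma \<phi> x y + 1 / 2 ^ N"
    unfolding d_Sigma_def using C0 prod_nonneg[of x y] vague_nonneg[of \<phi> "Pset x" "Pset y"]
    by (simp add: algebra_simps mult_left_mono)
  finally show ?thesis unfolding C_def .
qed

lemma push_cont:
  assumes "bij q"
  shows "continuous_map (Metric_space.mtopology Conf_lf (d_Sigma \<phi>))
                        (Metric_space.mtopology Conf_lf (d_Sigma \<phi>)) (push q)"
proof -
  interpret Metric_space Conf_lf "d_Sigma \<phi>" by (rule metric_Sigma)
  show ?thesis
  unfolding continuous_map_def topspace_mtopology
  proof (intro conjI allI impI)
    show "push q \<in> Conf_lf \<rightarrow> Conf_lf" using push_in[OF assms] by auto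
    fix U assume U: "openin mtopology U"
    show "openin mtopology {x \<in> Conf_lf. push q x \<in> U}"
      unfolding openin_mtopology
    proof (intro conjI allI impI)
      fix x assume x: "x \<in> {x \<in> Conf_lf. push q x \<in> U}"
      then obtain e where e: "e > 0" "mball (push q x) e \<subseteq> U" using U by (auto simp: openin_mtopology)
      obtain N where N: "(1/2::real) ^ N < e/2" using real_arch_pow_inv[of "e/2" "1/2::real"] e by auto
      define C :: real where "C = (\<Sum>j<N. 2 ^ Suc (q j)) + 1"
      have C0: "C > 0" unfolding C_def by (simp add: add_nonneg_pos sum_nonneg)
      have "mball x (e / (2 * C)) \<subseteq> {x \<in> Conf_lf. push q x \<in> U}"
      proof
        fix y assume "y \<in> mball x (e / (2 * C))"
        then have y: "y \<in> Conf_lf" "d_Sigma \<phi> x y < e / (2 * C)" by auto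
        have "d_Sigma \<phi> (push q x) (push q y) \<le> C * d_Sigma \<phi> x y + 1 / 2 ^ N"
          using Sigma_bound[OF assms] unfolding C_def by blast
        also have "C * d_Sigma \<phi> x y < e / 2" using y C0 by (simp add: field_simps)
        also have "1 / 2 ^ N = (1/2::real) ^ N" by (simp add: power_one_over)
        finally have "d_Sigma \<phi> (push q x) (push q y) < e" using N by linarith
        then show "y \<in> {x \<in> Conf_lf. push q x \<in> U}" using e x y push_in[OF assms] by auto
      qed
      then show "\<exists>r>0. mball x r \<subseteq> {x \<in> Conf_lf. push q x \<in> U}"
        using e C0 by (intro exI[of _ "e / (2 * C)"]) auto
    qed auto
  qed
qed

theorem mainTheorem3:
  fixes \<phi> :: "nat \<Rightarrow> complex \<Rightarrow> real" and p :: "nat \<Rightarrow> nat"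
  assumes "admissible_tests \<phi>" and "bij p"
  shows "continuous_map (Metric_space.mtopology Conf_lf (d_Sigma \<phi>))
                        (Metric_space.mtopology Conf_lf (d_Sigma \<phi>)) (push p)
       \<and> homeomorphic_map (Metric_space.mtopology Conf_lf (d_Sigma \<phi>))
                        (Metric_space.mtopology Conf_lf (d_Sigma \<phi>)) (push p)"
proof -
  have bi: "bij (inv p)" using assms(2) by (simp add: bij_imp_bij_inv)
  have "homeomorphic_maps (Metric_space.mtopology Conf_lf (d_Sigma \<phi>))
                        (Metric_space.mtopology Conf_lf (d_Sigma \<phi>)) (push p) (push (inv p))"
    unfolding homeomorphic_maps_def
    using push_cont[OF assms(2)] push_cont[OF bi] assms(2)
    by (simp add: push_def Metric_space.topspace_mtopology[OF metric_Sigma] surj_f_inv_f bij_is_surj bij_is_inj inv_f_f)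
  then show ?thesis using push_cont[OF assms(2)] homeomorphic_maps_imp_map by blast
qed

end
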